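(* Let $X$ be a real Banach space ordered by a generating and normal cone $K$. Let $\hat A$ be a bounded linear operator on $X$ with $\hat A(K)\subseteq K$, and suppose $\hat A=T+F$ where $T,F$ are bounded linear operators with $T(K)\subseteq K$, $F(K)\subseteq K$ and $r(T)<1$. Then the function $\lambda\mapsto r\big(F(\lambda I-T)^{-1}\big)$ is non-increasing and convex on $(r(T),\infty)$, and exactly one of the following holds: 1. $r\big(F(\lambda I-T)^{-1}\big)<1$ for all $\lambda>r(T)$; in this case $r(\hat A)=r(T)$. 2. There exist $r(T)<\lambda_1<\lambda_2$ with $r\big(F(\lambda_1 I-T)^{-1}\big)\ge 1$ and $r\big(F(\lambda_2 I-T)^{-1}\big)<1$; in this case $r(\hat A)>r(T)$ and $r\big(F(r(\hat A)I-T)^{-1}\big)=1$.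
   Context: A cone $K\subseteq X$ is a closed convex set such that $\alpha x\in K$ whenever $x\in K,\ \alpha\ge 0$, and such that $x\in K$, $-x\in K$ imply $x=0$. $K$ is generating if $X=K-K$, and normal if there is $\gamma>0$ such that $0\le x\le y$ implies $\|x\|\le\gamma\|y\|$, where $x\le y$ means $y-x\in K$. Spectrum and spectral radius $r(\cdot)$ of operators on a real Banach space are those of the complexification. *)

theory Defs
  imports "HOL-Analysis.Analysis"
begin

definition is_cone :: "'a::real_normed_vector set \<Rightarrow> bool" where
  "is_cone K \<longleftrightarrow> closed K \<and> convex K \<and>
     (\<forall>x\<in>K. \<forall>\<alpha>::real. \<alpha> \<ge> 0 \<longrightarrow> \<alpha> *\<^sub>R x \<in> K) \<and>
     (\<forall>x. x \<in> K \<and> - x \<in> K \<longrightarrow> x = 0)"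

definition generating_cone :: "'a::real_normed_vector set \<Rightarrow> bool" where
  "generating_cone K \<longleftrightarrow> UNIV = {x - y | x y. x \<in> K \<and> y \<in> K}"

definition normal_cone :: "'a::real_normed_vector set \<Rightarrow> bool" where
  "normal_cone K \<longleftrightarrow> (\<exists>\<gamma>>0. \<forall>x y. x \<in> K \<and> y - x \<in> K \<longrightarrow> norm x \<le> \<gamma> * norm y)"

text \<open>Complexification: \<open>X_C = X \<times> X\<close> (pair \<open>(x,y)\<close> stands for \<open>x + i y\<close>).
  The operator \<open>z I - T_C\<close> on \<open>X_C\<close> for \<open>z = a + i b\<close>.\<close>
definition cshift :: "('a::real_normed_vector \<Rightarrow>\<^sub>L 'a) \<Rightarrow> complex \<Rightarrow> 'a \<times> 'a \<Rightarrow> 'a \<times> 'a" where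
  "cshift T z = (\<lambda>(x, y).
     (Re z *\<^sub>R x - Im z *\<^sub>R y - blinfun_apply T x,
      Im z *\<^sub>R x + Re z *\<^sub>R y - blinfun_apply T y))"

definition cspectrum :: "('a::real_normed_vector \<Rightarrow>\<^sub>L 'a) \<Rightarrow> complex set" where
  "cspectrum T = {z. \<not> (\<exists>S. bounded_linear S \<and> S \<circ> cshift T z = id \<and> cshift T z \<circ> S = id)}"

text \<open>Spectral radius (with the convention \<open>r = 0\<close> if the spectrum is empty,
  which only happens for the trivial space).\<close>
definition spec_rad :: "('a::real_normed_vector \<Rightarrow>\<^sub>L 'a) \<Rightarrow> real" where
  "spec_rad T = Sup (insert 0 (cmod ` cspectrum T))"

text \<open>Inverse of a bounded operator on \<open>X\<close> (meaningful when it is invertible).\<close>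
definition op_inv :: "('a::real_normed_vector \<Rightarrow>\<^sub>L 'a) \<Rightarrow> ('a \<Rightarrow>\<^sub>L 'a)" where
  "op_inv M = (SOME S. S o\<^sub>L M = id_blinfun \<and> M o\<^sub>L S = id_blinfun)"

definition FR :: "('a::real_normed_vector \<Rightarrow>\<^sub>L 'a) \<Rightarrow> ('a \<Rightarrow>\<^sub>L 'a) \<Rightarrow> real \<Rightarrow> ('a \<Rightarrow>\<^sub>L 'a)" where
  "FR F T l = F o\<^sub>L op_inv (l *\<^sub>R id_blinfun - T)"

end

theory Submission
  imports Defs
begin

primrec bpow :: "('a::real_normed_vector \<Rightarrow>\<^sub>L 'a) \<Rightarrow> nat \<Rightarrow> ('a \<Rightarrow>\<^sub>L 'a)" where
  "bpow B 0 = id_blinfun"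
| "bpow B (Suc n) = B o\<^sub>L bpow B n"

lemma bpow_apply_Suc': "blinfun_apply (bpow B (Suc n)) x = bpow B n (B x)"
  by (induction n arbitrary: x) auto

lemma bpow_add: "blinfun_apply (bpow B (m + n)) x = bpow B m (bpow B n x)"
  by (induction m arbitrary: x) auto

lemma bpow_add_blinfun: "bpow B (m + n) = bpow B m o\<^sub>L bpow B n"
  by (rule blinfun_eqI) (simp add: bpow_add)

lemma norm_bpow_add: "norm (bpow B (m + n)) \<le> norm (bpow B m) * norm (bpow B n)"
  by (simp add: bpow_add_blinfun norm_blinfun_compose)

lemma norm_bpow_mult: "norm (bpow B (k * m)) \<le> norm (bpow B m) ^ k"
proof (induction k)
  case 0
  then show ?case by (simp add: norm_blinfun_id_le)
next
  case (Suc k)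
  have "norm (bpow B (Suc k * m)) \<le> norm (bpow B m) * norm (bpow B (k * m))"
    using norm_bpow_add[of B m "k*m"] by (simp add: add.commute)
  also have "\<dots> \<le> norm (bpow B m) * norm (bpow B m) ^ k"
    using Suc by (simp add: mult_left_mono)
  finally show ?case by simp
qed

lemma norm_bpow_le: "norm (bpow B n) \<le> norm B ^ n"
proof (induction n)
  case 0 then show ?case by (simp add: norm_blinfun_id_le)
next
  case (Suc n)
  then show ?case
    by (simp) (meson mult_left_mono norm_blinfun_compose norm_ge_zero order_trans)
qed

definition gr :: "('a::real_normed_vector \<Rightarrow>\<^sub>L 'a) \<Rightarrow> real" where
  "gr B = Inf ((\<lambda>n. root n (norm (bpow B n))) ` {1..})"

lemma gr_bdd: "bdd_below ((\<lambda>n. root n (norm (bpow B n))) ` {1..})"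
  by (rule bdd_belowI[of _ 0]) auto

lemma gr_le: "n \<ge> 1 \<Longrightarrow> gr B \<le> root n (norm (bpow B n))"
  unfolding gr_def by (rule cInf_lower[OF _ gr_bdd]) auto

lemma gr_nonneg: "gr B \<ge> 0"
  unfolding gr_def by (rule cINF_greatest) auto

lemma gr_bound:
  assumes "gr B < \<eta>"
  shows "\<exists>C. \<forall>n. norm (bpow B n) \<le> C * \<eta> ^ n"
proof -
  have "Inf ((\<lambda>n. root n (norm (bpow B n))) ` {1..}) < \<eta>" using assms by (simp add: gr_def)
  then obtain m where m: "m \<ge> 1" "root m (norm (bpow B m)) < \<eta>"
    by (subst (asm) cInf_less_iff[OF _ gr_bdd]) auto
  have eta: "\<eta> > 0" using gr_nonneg[of B] assms by linarith
  have bm: "norm (bpow B m) \<le> \<eta> ^ m"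
  proof -
    have "root m (norm (bpow B m)) ^ m = norm (bpow B m)" using m(1) by (simp add: real_root_pow_pos2)
    moreover have "root m (norm (bpow B m)) ^ m \<le> \<eta> ^ m"
      using m by (intro power_mono) (auto simp: real_root_ge_zero)
    ultimately show ?thesis by simp
  qed
  define C where "C = Max ((\<lambda>j. norm (bpow B j) / \<eta> ^ j) ` {..<m})"
  have "norm (bpow B n) \<le> C * \<eta> ^ n" for n
  proof -
    define k j where "k = n div m" and "j = n mod m"
    have n: "n = j + k * m" using k_def j_def by simp
    have jm: "j < m" using m(1) j_def by simp
    have "norm (bpow B n) \<le> norm (bpow B j) * norm (bpow B (k*m))"
      unfolding n by (rule norm_bpow_add)
    also have "\<dots> \<le> norm (bpow B j) * (\<eta> ^ m) ^ k"
      using norm_bpow_mult[of B k m] power_mono[OF bm, of k]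
      by (intro mult_left_mono) auto
    also have "\<dots> = (norm (bpow B j) / \<eta> ^ j) * \<eta> ^ n"
      using eta by (simp add: n power_add power_mult[symmetric] mult.commute)
    also have "\<dots> \<le> C * \<eta> ^ n"
      unfolding C_def using jm eta by (intro mult_right_mono Max_ge) auto
    finally show ?thesis .
  qed
  then show ?thesis by blast
qed

lemma gr_le_of_bound:
  assumes th: "\<theta> > 0" and M: "\<And>n. norm (bpow B n) \<le> M * \<theta> ^ n"
  shows "gr B \<le> \<theta>"
proof -
  define M' where "M' = max M 1"
  have M': "norm (bpow B n) \<le> M' * \<theta> ^ n" for n
    using M[of n] th unfolding M'_def by (smt (verit) mult_right_mono zero_le_power)
  have le: "gr B \<le> root n M' * \<theta>" if "n \<ge> 1" for n
  proof -
    have "gr B \<le> root n (norm (bpow B n))" using gr_le that by blast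
    also have "\<dots> \<le> root n (M' * \<theta> ^ n)" using that M' by (simp)
    also have "\<dots> = root n M' * \<theta>" using that th by (simp add: real_root_mult real_root_power_cancel)
    finally show ?thesis .
  qed
  have lim: "(\<lambda>n. root n M' * \<theta>) \<longlonglongrightarrow> 1 * \<theta>"
    unfolding M'_def by (intro tendsto_intros LIMSEQ_root_const) auto
  have "gr B \<le> 1 * \<theta>"
    by (rule tendsto_lowerbound[OF lim]) (auto intro!: eventually_sequentiallyI[of 1] le)
  then show ?thesis by simp
qed

lemma bpow_Suc_right: "bpow B (Suc n) = bpow B n o\<^sub>L B"
  using bpow_add_blinfun[of B n 1] by (simp add: blinfun_eqI)

lemma bpow_comm: "blinfun_apply B (bpow B n x) = bpow B n (B x)"
  using bpow_apply_Suc'[of B n x] by simp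

lemma blinfun_compose_bl_right: "bounded_linear (\<lambda>X. (M::'b::real_normed_vector \<Rightarrow>\<^sub>L 'c::real_normed_vector) o\<^sub>L (X::'a::real_normed_vector \<Rightarrow>\<^sub>L 'b))"
  by (rule bounded_bilinear.bounded_linear_right[OF bounded_bilinear_blinfun_compose])

lemma blinfun_compose_bl_left: "bounded_linear (\<lambda>X. (X::'b::real_normed_vector \<Rightarrow>\<^sub>L 'c::real_normed_vector) o\<^sub>L (M::'a::real_normed_vector \<Rightarrow>\<^sub>L 'b))"
  by (rule bounded_bilinear.bounded_linear_left[OF bounded_bilinear_blinfun_compose])

lemma neumann:
  fixes B :: "'a::banach \<Rightarrow>\<^sub>L 'a"
  assumes gl: "gr B < l" and l0: "l > 0"
  shows "(\<lambda>n. ((1/l)^(Suc n)) *\<^sub>R bpow B n) sums (\<Sum>n. ((1/l)^(Suc n)) *\<^sub>R bpow B n)"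
    and "(\<Sum>n. ((1/l)^(Suc n)) *\<^sub>R bpow B n) o\<^sub>L (l *\<^sub>R id_blinfun - B) = id_blinfun"
    and "(l *\<^sub>R id_blinfun - B) o\<^sub>L (\<Sum>n. ((1/l)^(Suc n)) *\<^sub>R bpow B n) = id_blinfun"
proof -
  define f where "f n = ((1/l)^(Suc n)) *\<^sub>R bpow B n" for n
  define W where "W = (\<Sum>n. f n)"
  obtain \<eta> where eta: "gr B < \<eta>" "\<eta> < l" using gl dense by blast
  obtain C where C: "\<And>n. norm (bpow B n) \<le> C * \<eta> ^ n" using gr_bound[OF eta(1)] by blast
  have eta0: "\<eta> > 0" using gr_nonneg[of B] eta by linarith
  have "summable (\<lambda>n. (C / l) * (\<eta> / l) ^ n)"
    using eta eta0 by (intro summable_mult summable_geometric) auto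
  then have sf: "summable f"
  proof (rule summable_comparison_test'[where N=0])
    fix n
    have "norm (f n) = (1/l)^(Suc n) * norm (bpow B n)" unfolding f_def using l0 by simp
    also have "\<dots> \<le> (1/l)^(Suc n) * (C * \<eta> ^ n)" using C l0 by (intro mult_left_mono) auto
    also have "\<dots> = (C / l) * (\<eta> / l) ^ n" by (simp add: power_divide field_simps)
    finally show "norm (f n) \<le> (C / l) * (\<eta> / l) ^ n" .
  qed
  then have fs: "f sums W" unfolding W_def by (simp add: summable_sums)
  then show "(\<lambda>n. ((1/l)^(Suc n)) *\<^sub>R bpow B n) sums (\<Sum>n. ((1/l)^(Suc n)) *\<^sub>R bpow B n)"
    unfolding f_def W_def by simp
  define g where "g n = ((1/l)^n) *\<^sub>R bpow B n" for n
  have "(\<lambda>n. l *\<^sub>R f n) \<longlonglongrightarrow> l *\<^sub>R 0"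
    by (intro tendsto_intros summable_LIMSEQ_zero sf)
  moreover have "l *\<^sub>R f n = g n" for n unfolding f_def g_def using l0 by simp
  ultimately have g0: "g \<longlonglongrightarrow> 0" by simp
  have tel: "(\<lambda>n. g n - g (Suc n)) sums id_blinfun"
    using telescope_sums'[OF g0] by (simp add: g_def)
  have "(\<lambda>n. f n o\<^sub>L (l *\<^sub>R id_blinfun - B)) sums (W o\<^sub>L (l *\<^sub>R id_blinfun - B))"
    by (rule bounded_linear.sums[OF blinfun_compose_bl_left fs])
  moreover have "f n o\<^sub>L (l *\<^sub>R id_blinfun - B) = g n - g (Suc n)" for n
    unfolding f_def g_def using l0
    by (intro blinfun_eqI) (simp add: bpow_Suc_right blinfun.bilinear_simps field_simps bpow_comm)
  ultimately show "(\<Sum>n. ((1/l)^(Suc n)) *\<^sub>R bpow B n) o\<^sub>L (l *\<^sub>R id_blinfun - B) = id_blinfun"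
    using tel sums_unique2 unfolding W_def f_def by fastforce
  have "(\<lambda>n. (l *\<^sub>R id_blinfun - B) o\<^sub>L f n) sums ((l *\<^sub>R id_blinfun - B) o\<^sub>L W)"
    by (rule bounded_linear.sums[OF blinfun_compose_bl_right fs])
  moreover have "(l *\<^sub>R id_blinfun - B) o\<^sub>L f n = g n - g (Suc n)" for n
    unfolding f_def g_def using l0
    by (intro blinfun_eqI) (simp add: blinfun.bilinear_simps field_simps bpow_comm)
  ultimately show "(l *\<^sub>R id_blinfun - B) o\<^sub>L (\<Sum>n. ((1/l)^(Suc n)) *\<^sub>R bpow B n) = id_blinfun"
    using tel sums_unique2 unfolding W_def f_def by fastforce
qed

lemma inv_unique:
  assumes "W o\<^sub>L M = id_blinfun" "M o\<^sub>L V = id_blinfun"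
  shows "W = V"
proof -
  have "W = W o\<^sub>L (M o\<^sub>L V)" using assms(2) by (simp add: blinfun_eqI)
  also have "\<dots> = (W o\<^sub>L M) o\<^sub>L V" by (simp add: blinfun_eqI)
  also have "\<dots> = V" using assms(1) by (simp add: blinfun_eqI)
  finally show ?thesis .
qed

lemma op_inv_eq:
  assumes "W o\<^sub>L M = id_blinfun" "M o\<^sub>L W = id_blinfun"
  shows "op_inv M = W"
proof -
  have "op_inv M o\<^sub>L M = id_blinfun \<and> M o\<^sub>L op_inv M = id_blinfun"
    unfolding op_inv_def by (rule someI[of _ W]) (use assms in auto)
  then show ?thesis using inv_unique assms by metis
qed

lemma baire_banach:
  fixes E :: "nat \<Rightarrow> 'a::banach set"
  assumes cl: "\<And>n. closed (E n)" and un: "\<And>x. \<exists>n. x \<in> E n"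
  shows "\<exists>n. interior (E n) \<noteq> {}"
proof (rule ccontr)
  assume "\<not> ?thesis"
  then have "\<And>T. T \<in> range E \<Longrightarrow> closedin Met_TC.mtopology T \<and> Met_TC.mtopology interior_of T = {}"
    using cl by auto
  then have "Met_TC.mtopology interior_of \<Union>(range E) = {}"
    by (intro Met_TC.metric_Baire_category_alt) (auto simp: complete_UNIV)
  moreover have "\<Union>(range E) = UNIV" using un by auto
  ultimately show False by simp
qed

lemma ubp:
  fixes f :: "nat \<Rightarrow> ('a::banach \<Rightarrow>\<^sub>L 'b::real_normed_vector)"
  assumes pb: "\<And>x. \<exists>C. \<forall>n. norm (f n x) \<le> C"
  shows "\<exists>M. \<forall>n. norm (f n) \<le> M"
proof -
  define E where "E k = {x. \<forall>n. norm (f n x) \<le> real k}" for k :: nat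
  have "closed (E k)" for k
  proof -
    have "E k = (\<Inter>n. {x. norm (f n x) \<le> real k})" unfolding E_def by auto
    moreover have "closed {x. norm (f n x) \<le> real k}" for n
      by (intro closed_Collect_le continuous_intros) 
    ultimately show ?thesis by auto
  qed
  moreover have "\<exists>k. x \<in> E k" for x
  proof -
    obtain C where "\<forall>n. norm (f n x) \<le> C" using pb by blast
    moreover obtain k :: nat where "C \<le> real k" using real_arch_simple by blast
    ultimately show ?thesis unfolding E_def by (auto intro: order_trans)
  qed
  ultimately obtain k where "interior (E k) \<noteq> {}" using baire_banach by blast
  then obtain x0 where "x0 \<in> interior (E k)" by blast
  then obtain r where r: "r > 0" "ball x0 r \<subseteq> E k" using open_contains_ball[of "interior (E k)"] interior_subset[of "E k"] by blast
  have x0: "x0 \<in> E k" using r by auto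
  have small: "norm (f n y) \<le> 2 * real k" if "norm y < r" for n y
  proof -
    have "x0 + y \<in> E k" using r that by (auto simp: dist_norm)
    then have "norm (f n (x0 + y)) \<le> real k" unfolding E_def by auto
    moreover have "norm (f n x0) \<le> real k" using x0 unfolding E_def by auto
    moreover have "f n y = f n (x0 + y) - f n x0" by (simp add: blinfun.bilinear_simps)
    ultimately show ?thesis using norm_triangle_ineq4[of "f n (x0 + y)" "f n x0"] by simp
  qed
  have "norm (f n) \<le> 4 * real k / r" for n
  proof (rule norm_blinfun_bound)
    show "0 \<le> 4 * real k / r" using r by simp
    fix x
    show "norm (f n x) \<le> 4 * real k / r * norm x"
    proof (cases "x = 0")
      case True then show ?thesis by (simp add: blinfun.bilinear_simps)
    next
      case False
      define c where "c = (r / 2) / norm x"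
      have c0: "c > 0" using False r by (simp add: c_def)
      have "norm (c *\<^sub>R x) < r" using False r by (simp add: c_def)
      then have "norm (f n (c *\<^sub>R x)) \<le> 2 * real k" by (rule small)
      then have "c * norm (f n x) \<le> 2 * real k" using c0 by (simp add: blinfun.bilinear_simps)
      then have "norm (f n x) \<le> 2 * real k / c" using c0 by (simp add: field_simps)
      also have "\<dots> = 4 * real k / r * norm x" using False r by (simp add: c_def field_simps)
      finally show ?thesis .
    qed
  qed
  then show ?thesis by blast
qed

lemma comp_id_r[simp]: "X o\<^sub>L id_blinfun = X" by (rule blinfun_eqI) simp
lemma comp_id_l[simp]: "id_blinfun o\<^sub>L X = X" by (rule blinfun_eqI) simp
lemma comp_assoc: "(X o\<^sub>L Y) o\<^sub>L Z = X o\<^sub>L (Y o\<^sub>L Z)" by (rule blinfun_eqI) simp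

lemma blinfun_apply_eq: "M = N \<Longrightarrow> blinfun_apply M x = blinfun_apply N x" by simp

locale ocone =
  fixes K :: "'a::banach set"
  assumes cone: "is_cone K" and gen: "generating_cone K" and nor: "normal_cone K"
begin

lemma closedK: "closed K" using cone by (simp add: is_cone_def)
lemma convexK: "convex K" using cone by (simp add: is_cone_def)
lemma scalK: "x \<in> K \<Longrightarrow> a \<ge> 0 \<Longrightarrow> a *\<^sub>R x \<in> K" using cone by (simp add: is_cone_def)
lemma decomp: "\<exists>u v. u \<in> K \<and> v \<in> K \<and> x = u - v"
proof -
  have "x \<in> {x - y | x y. x \<in> K \<and> y \<in> K}" using gen unfolding generating_cone_def by blast
  then show ?thesis by blast
qed
lemma zeroK: "0 \<in> K"
  using decomp[of 0] scalK[of _ 0] by force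
lemma addK: "x \<in> K \<Longrightarrow> y \<in> K \<Longrightarrow> x + y \<in> K"
proof -
  assume "x \<in> K" "y \<in> K"
  then have "(1/2) *\<^sub>R x + (1/2) *\<^sub>R y \<in> K" using convexK by (intro convexD) auto
  then have "2 *\<^sub>R ((1/2) *\<^sub>R x + (1/2) *\<^sub>R y) \<in> K" by (rule scalK) simp
  then show ?thesis by (simp add: scaleR_add_right)
qed
lemma sumK: "(\<And>i. i \<in> I \<Longrightarrow> f i \<in> K) \<Longrightarrow> sum f I \<in> K"
  by (induction I rule: infinite_finite_induct) (auto simp: zeroK addK)

definition gam where "gam = (SOME g. g > 0 \<and> (\<forall>x y. x \<in> K \<and> y - x \<in> K \<longrightarrow> norm x \<le> g * norm y))"
lemma gam: "gam > 0" "x \<in> K \<Longrightarrow> y - x \<in> K \<Longrightarrow> norm x \<le> gam * norm y"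
proof -
  have "\<exists>g. g > 0 \<and> (\<forall>x y. x \<in> K \<and> y - x \<in> K \<longrightarrow> norm x \<le> g * norm y)"
    using nor unfolding normal_cone_def by blast
  then have "gam > 0 \<and> (\<forall>x y. x \<in> K \<and> y - x \<in> K \<longrightarrow> norm x \<le> gam * norm y)"
    unfolding gam_def by (rule someI_ex)
  then show "gam > 0" "x \<in> K \<Longrightarrow> y - x \<in> K \<Longrightarrow> norm x \<le> gam * norm y" by auto
qed

definition pos :: "('a \<Rightarrow>\<^sub>L 'a) \<Rightarrow> bool" where "pos B \<longleftrightarrow> (\<forall>x\<in>K. B x \<in> K)"

lemma posD: "pos B \<Longrightarrow> x \<in> K \<Longrightarrow> B x \<in> K" by (simp add: pos_def)
lemma pos_comp: "pos B \<Longrightarrow> pos C \<Longrightarrow> pos (B o\<^sub>L C)" by (simp add: pos_def)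
lemma pos_id: "pos id_blinfun" by (simp add: pos_def)
lemma pos_bpow: "pos B \<Longrightarrow> pos (bpow B n)"
  by (induction n) (auto simp: pos_id pos_comp)
lemma pos_add: "pos B \<Longrightarrow> pos C \<Longrightarrow> pos (B + C)" by (simp add: pos_def blinfun.bilinear_simps addK)
lemma pos_scaleR: "pos B \<Longrightarrow> a \<ge> 0 \<Longrightarrow> pos (a *\<^sub>R B)" by (simp add: pos_def scalK blinfun.scaleR_left)

lemma lim_in_K: "(\<And>n. f n \<in> K) \<Longrightarrow> f \<longlonglongrightarrow> l \<Longrightarrow> l \<in> K"
  using closedK closed_sequentially by blast

lemma pos_sums:
  assumes "f sums W" "\<And>n. pos (f n)"
  shows "pos W"
  unfolding pos_def
proof
  fix u assume u: "u \<in> K"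
  have "(\<lambda>n. f n u) sums W u"
    by (rule bounded_linear.sums[OF blinfun.bounded_linear_left assms(1)])
  then have lim: "(\<lambda>n. \<Sum>k<n. f k u) \<longlonglongrightarrow> W u" by (simp add: sums_def)
  have mem: "(\<Sum>k<n. f k u) \<in> K" for n using assms(2) u by (intro sumK) (simp add: posD)
  show "W u \<in> K" using lim_in_K[OF mem lim] .
qed

lemma gr_le_K:
  assumes th: "\<theta> > 0" and b: "\<And>u. u \<in> K \<Longrightarrow> \<exists>C. \<forall>n. norm (bpow B n u) \<le> C * \<theta> ^ n"
  shows "gr B \<le> \<theta>"
proof -
  define f where "f n = (1 / \<theta> ^ n) *\<^sub>R bpow B n" for n
  have "\<exists>C. \<forall>n. norm (f n x) \<le> C" for x
  proof -
    obtain u v where uv: "u \<in> K" "v \<in> K" "x = u - v" using decomp by blast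
    obtain Cu where Cu: "\<And>n. norm (bpow B n u) \<le> Cu * \<theta> ^ n" using b uv by blast
    obtain Cv where Cv: "\<And>n. norm (bpow B n v) \<le> Cv * \<theta> ^ n" using b uv by blast
    have "norm (f n x) \<le> Cu + Cv" for n
    proof -
      have "norm (f n x) \<le> norm (f n u) + norm (f n v)"
        unfolding uv(3) by (simp add: blinfun.bilinear_simps norm_triangle_ineq4)
      also have "norm (f n u) = norm (bpow B n u) / \<theta> ^ n" using th by (simp add: f_def blinfun.scaleR_left field_simps)
      also have "\<dots> \<le> Cu" using Cu[of n] th by (simp add: divide_le_eq)
      also have "norm (f n v) = norm (bpow B n v) / \<theta> ^ n" using th by (simp add: f_def blinfun.scaleR_left field_simps)
      also have "\<dots> \<le> Cv" using Cv[of n] th by (simp add: divide_le_eq)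
      finally show ?thesis by simp
    qed
    then show ?thesis by blast
  qed
  then obtain M where M: "\<And>n. norm (f n) \<le> M" using ubp by blast
  have "norm (bpow B n) \<le> M * \<theta> ^ n" for n
  proof -
    have "bpow B n = \<theta> ^ n *\<^sub>R f n" using th by (simp add: f_def)
    then have "norm (bpow B n) = \<theta> ^ n * norm (f n)" using th by simp
    also have "\<dots> \<le> \<theta> ^ n * M" using M th by (intro mult_left_mono) auto
    finally show ?thesis by (simp add: mult.commute)
  qed
  then show ?thesis using gr_le_of_bound th by blast
qed

lemma L0:
  assumes B: "pos B" and mu: "\<mu> > 0" and W: "pos W" and inv: "W o\<^sub>L (\<mu> *\<^sub>R id_blinfun - B) = id_blinfun"
  shows "gr B \<le> \<mu>"
proof (rule gr_le_K[OF mu])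
  have Wy: "W y = (1/\<mu>) *\<^sub>R (y + W (B y))" for y
  proof -
    have "W (\<mu> *\<^sub>R y - B y) = y" using blinfun_apply_eq[OF inv, of y]
      by (simp add: blinfun.bilinear_simps)
    then have "\<mu> *\<^sub>R W y = y + W (B y)" by (simp add: blinfun.bilinear_simps algebra_simps)
    then have "(1/\<mu>) *\<^sub>R (\<mu> *\<^sub>R W y) = (1/\<mu>) *\<^sub>R (y + W (B y))" by simp
    then show ?thesis using mu by simp
  qed
  have claim: "W u = (\<Sum>k<n. (1/\<mu>)^(Suc k) *\<^sub>R bpow B k u) + (1/\<mu>)^n *\<^sub>R W (bpow B n u)" for n u
  proof (induction n)
    case 0 then show ?case by simp
  next
    case (Suc n)
    have "(1/\<mu>)^n *\<^sub>R W (bpow B n u) = (1/\<mu>)^(Suc n) *\<^sub>R bpow B n u + (1/\<mu>)^(Suc n) *\<^sub>R W (bpow B (Suc n) u)"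
      by (subst Wy) (simp add: scaleR_add_right)
    then show ?case using Suc by (simp add: algebra_simps)
  qed
  fix u assume u: "u \<in> K"
  have "norm (bpow B n u) \<le> (gam * \<mu> * norm (W u)) * \<mu> ^ n" for n
  proof -
    have x: "(1/\<mu>)^(Suc n) *\<^sub>R bpow B n u \<in> K" using u B mu by (intro scalK posD[OF pos_bpow]) auto
    have "W u - (1/\<mu>)^(Suc n) *\<^sub>R bpow B n u = (\<Sum>k<n. (1/\<mu>)^(Suc k) *\<^sub>R bpow B k u) + (1/\<mu>)^(Suc n) *\<^sub>R W (bpow B (Suc n) u)"
      using claim[of u "Suc n"] by simp
    also have "\<dots> \<in> K" using u B W mu
      by (intro addK sumK scalK posD[OF pos_bpow] posD[OF W] posD[OF pos_bpow]) auto
    finally have "norm ((1/\<mu>)^(Suc n) *\<^sub>R bpow B n u) \<le> gam * norm (W u)" using gam(2) x by blast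
    then have "(1/\<mu>)^(Suc n) * norm (bpow B n u) \<le> gam * norm (W u)" using mu by simp
    then show ?thesis using mu by (simp add: field_simps)
  qed
  then show "\<exists>C. \<forall>n. norm (bpow B n u) \<le> C * \<mu> ^ n" by blast
qed

lemma Lstrict:
  assumes B: "pos B" and l: "l > 0" and W: "pos W"
    and inv1: "W o\<^sub>L (l *\<^sub>R id_blinfun - B) = id_blinfun"
    and inv2: "(l *\<^sub>R id_blinfun - B) o\<^sub>L W = id_blinfun"
  shows "gr B < l"
proof -
  define e where "e = min (l/2) (1 / (2 * (norm W + 1)))"
  have nW: "0 < 2 * norm W + 2" using norm_ge_zero[of W] by linarith
  have e0: "e > 0" "e < l" using l nW by (auto simp: e_def)
  define V where "V = e *\<^sub>R W"
  have nV: "norm V \<le> 1/2"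
  proof -
    have "norm V = e * norm W" using e0 by (simp add: V_def)
    also have "\<dots> \<le> (1 / (2 * (norm W + 1))) * norm W" unfolding e_def
      by (intro mult_right_mono) auto
    also have "\<dots> \<le> 1/2" using nW by (simp add: field_simps)
    finally show ?thesis .
  qed
  have "gr V \<le> 1/2"
  proof (rule gr_le_of_bound[where M=1])
    fix n show "norm (bpow V n) \<le> 1 * (1/2) ^ n"
      using norm_bpow_le[of V n] power_mono[OF nV, of n] by simp
  qed auto
  then have gV: "gr V < 1" by simp
  define N where "N = (\<Sum>n. ((1/1)^(Suc n)) *\<^sub>R bpow V n)"
  note nm = neumann[OF gV, simplified, folded N_def[simplified]]
  have N1: "N o\<^sub>L (id_blinfun - V) = id_blinfun" using nm(2) by simp
  have posN: "pos N" using nm(1) unfolding N_def[simplified]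
  proof (rule pos_sums)
    have "pos V" unfolding V_def using W e0 by (intro pos_scaleR) auto
    then show "pos (bpow V n)" for n by (simp add: pos_bpow)
  qed
  have fac: "(l - e) *\<^sub>R id_blinfun - B = (l *\<^sub>R id_blinfun - B) o\<^sub>L (id_blinfun - V)"
  proof (rule blinfun_eqI)
    fix x
    have "l *\<^sub>R W x - B (W x) = x" using blinfun_apply_eq[OF inv2, of x] by (simp add: blinfun.bilinear_simps)
    then show "blinfun_apply ((l - e) *\<^sub>R id_blinfun - B) x = blinfun_apply ((l *\<^sub>R id_blinfun - B) o\<^sub>L (id_blinfun - V)) x"
      by (simp add: V_def blinfun.bilinear_simps algebra_simps)
  qed
  have "(N o\<^sub>L W) o\<^sub>L ((l - e) *\<^sub>R id_blinfun - B) = id_blinfun"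
  proof (rule blinfun_eqI)
    fix x
    have "(N o\<^sub>L W) o\<^sub>L ((l - e) *\<^sub>R id_blinfun - B) = N o\<^sub>L (W o\<^sub>L (l *\<^sub>R id_blinfun - B)) o\<^sub>L (id_blinfun - V)"
      unfolding fac by (simp add: blinfun_eqI)
    also have "\<dots> = id_blinfun" unfolding inv1 using N1 by (simp add: blinfun_eqI)
    finally show "blinfun_apply ((N o\<^sub>L W) o\<^sub>L ((l - e) *\<^sub>R id_blinfun - B)) x = blinfun_apply id_blinfun x" by simp
  qed
  moreover have "pos (N o\<^sub>L W)" using posN W by (rule pos_comp)
  ultimately have "gr B \<le> l - e" using e0 B by (intro L0) auto
  then show ?thesis using e0 by simp
qed

end

lemma coef_summable:
  fixes B :: "'a::banach \<Rightarrow>\<^sub>L 'a"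
  assumes gl: "gr B < r" and a: "\<And>n. \<bar>a n\<bar> \<le> D / r ^ n"
  shows "summable (\<lambda>n. a n *\<^sub>R bpow B n)" "(\<lambda>n. a n *\<^sub>R bpow B n) \<longlonglongrightarrow> 0"
proof -
  obtain \<eta> where eta: "gr B < \<eta>" "\<eta> < r" using gl dense by blast
  obtain C where C: "\<And>n. norm (bpow B n) \<le> C * \<eta> ^ n" using gr_bound[OF eta(1)] by blast
  have eta0: "\<eta> > 0" using gr_nonneg[of B] eta by linarith
  have r0: "r > 0" using eta0 eta by linarith
  have "summable (\<lambda>n. (D * C) * (\<eta> / r) ^ n)"
    using eta eta0 by (intro summable_mult summable_geometric) auto
  then show sf: "summable (\<lambda>n. a n *\<^sub>R bpow B n)"
  proof (rule summable_comparison_test'[where N=0])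
    fix n
    have "norm (a n *\<^sub>R bpow B n) = \<bar>a n\<bar> * norm (bpow B n)" by simp
    also have "\<dots> \<le> (D / r ^ n) * (C * \<eta> ^ n)" using C a r0 order_trans[OF abs_ge_zero a[of n]] by (intro mult_mono) auto
    also have "\<dots> = (D * C) * (\<eta> / r) ^ n" by (simp add: power_divide field_simps)
    finally show "norm (a n *\<^sub>R bpow B n) \<le> (D * C) * (\<eta> / r) ^ n" .
  qed
  then show "(\<lambda>n. a n *\<^sub>R bpow B n) \<longlonglongrightarrow> 0" by (rule summable_LIMSEQ_zero)
qed

lemma tele_gen:
  fixes B :: "'a::banach \<Rightarrow>\<^sub>L 'a"
  assumes P: "(\<lambda>n. a n *\<^sub>R bpow B n) sums P" and Q: "(\<lambda>n. b n *\<^sub>R bpow B n) sums Q"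
    and R: "(\<lambda>n. d n *\<^sub>R bpow B n) sums R"
    and c0: "(\<lambda>n. c n *\<^sub>R bpow B n) \<longlonglongrightarrow> 0"
    and e1: "\<And>n. \<alpha> * a n + \<beta> * b n = c n" and e2: "\<And>n. d n = c (Suc n)"
  shows "\<alpha> *\<^sub>R P + \<beta> *\<^sub>R Q - (B o\<^sub>L R) = c 0 *\<^sub>R id_blinfun"
    and "\<alpha> *\<^sub>R P + \<beta> *\<^sub>R Q - (R o\<^sub>L B) = c 0 *\<^sub>R id_blinfun"
proof -
  define g where "g n = c n *\<^sub>R bpow B n" for n
  have tel: "(\<lambda>n. g n - g (Suc n)) sums (c 0 *\<^sub>R id_blinfun)"
    using telescope_sums'[OF c0] by (simp add: g_def)
  have s1: "(\<lambda>n. \<alpha> *\<^sub>R (a n *\<^sub>R bpow B n) + \<beta> *\<^sub>R (b n *\<^sub>R bpow B n) - (B o\<^sub>L (d n *\<^sub>R bpow B n)))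
      sums (\<alpha> *\<^sub>R P + \<beta> *\<^sub>R Q - (B o\<^sub>L R))"
  proof -
    have 1: "(\<lambda>n. \<alpha> *\<^sub>R (a n *\<^sub>R bpow B n)) sums (\<alpha> *\<^sub>R P)" using P by (rule sums_scaleR_right)
    have 2: "(\<lambda>n. \<beta> *\<^sub>R (b n *\<^sub>R bpow B n)) sums (\<beta> *\<^sub>R Q)" using Q by (rule sums_scaleR_right)
    have 3: "(\<lambda>n. B o\<^sub>L (d n *\<^sub>R bpow B n)) sums (B o\<^sub>L R)" using bounded_linear.sums[OF blinfun_compose_bl_right[of B] R] by simp
    show ?thesis using sums_diff[OF sums_add[OF 1 2] 3] by simp
  qed
  have s2: "(\<lambda>n. \<alpha> *\<^sub>R (a n *\<^sub>R bpow B n) + \<beta> *\<^sub>R (b n *\<^sub>R bpow B n) - ((d n *\<^sub>R bpow B n) o\<^sub>L B))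
      sums (\<alpha> *\<^sub>R P + \<beta> *\<^sub>R Q - (R o\<^sub>L B))"
  proof -
    have 1: "(\<lambda>n. \<alpha> *\<^sub>R (a n *\<^sub>R bpow B n)) sums (\<alpha> *\<^sub>R P)" using P by (rule sums_scaleR_right)
    have 2: "(\<lambda>n. \<beta> *\<^sub>R (b n *\<^sub>R bpow B n)) sums (\<beta> *\<^sub>R Q)" using Q by (rule sums_scaleR_right)
    have 3: "(\<lambda>n. (d n *\<^sub>R bpow B n) o\<^sub>L B) sums (R o\<^sub>L B)" using bounded_linear.sums[OF blinfun_compose_bl_left[of B] R] by simp
    show ?thesis using sums_diff[OF sums_add[OF 1 2] 3] by simp
  qed
  have t1: "\<alpha> *\<^sub>R (a n *\<^sub>R bpow B n) + \<beta> *\<^sub>R (b n *\<^sub>R bpow B n) - (B o\<^sub>L (d n *\<^sub>R bpow B n)) = g n - g (Suc n)" for n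
  proof -
    have "\<alpha> *\<^sub>R (a n *\<^sub>R bpow B n) + \<beta> *\<^sub>R (b n *\<^sub>R bpow B n) = c n *\<^sub>R bpow B n"
      using e1[of n] by (simp add: scaleR_add_left[symmetric])
    moreover have "B o\<^sub>L (d n *\<^sub>R bpow B n) = c (Suc n) *\<^sub>R bpow B (Suc n)"
      using e2 by (intro blinfun_eqI) (simp add: blinfun.bilinear_simps)
    ultimately show ?thesis by (simp add: g_def)
  qed
  have t2: "\<alpha> *\<^sub>R (a n *\<^sub>R bpow B n) + \<beta> *\<^sub>R (b n *\<^sub>R bpow B n) - ((d n *\<^sub>R bpow B n) o\<^sub>L B) = g n - g (Suc n)" for n
  proof -
    have "\<alpha> *\<^sub>R (a n *\<^sub>R bpow B n) + \<beta> *\<^sub>R (b n *\<^sub>R bpow B n) = c n *\<^sub>R bpow B n"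
      using e1[of n] by (simp add: scaleR_add_left[symmetric])
    moreover have "(d n *\<^sub>R bpow B n) o\<^sub>L B = c (Suc n) *\<^sub>R bpow B (Suc n)"
      using e2 by (intro blinfun_eqI) (simp add: blinfun.bilinear_simps bpow_comm)
    ultimately show ?thesis by (simp add: g_def)
  qed
  show "\<alpha> *\<^sub>R P + \<beta> *\<^sub>R Q - (B o\<^sub>L R) = c 0 *\<^sub>R id_blinfun"
    using s1 tel unfolding t1 by (rule sums_unique2)
  show "\<alpha> *\<^sub>R P + \<beta> *\<^sub>R Q - (R o\<^sub>L B) = c 0 *\<^sub>R id_blinfun"
    using s2 tel unfolding t2 by (rule sums_unique2)
qed

lemma not_in_cspectrum:
  fixes B :: "'a::banach \<Rightarrow>\<^sub>L 'a"
  assumes gz: "gr B < cmod z"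
  shows "z \<notin> cspectrum B"
proof -
  define r where "r = cmod z"
  have r0: "r > 0" using gz gr_nonneg[of B] unfolding r_def by linarith
  have z0: "z \<noteq> 0" using r0 r_def by force
  define v where "v n = 1 / z ^ n" for n
  have vS: "z * v (Suc n) = v n" for n using z0 by (simp add: v_def)
  have vb: "cmod (v n) = 1 / r ^ n" for n by (simp add: v_def r_def norm_divide norm_power)
  have reb: "\<bar>Re (v n)\<bar> \<le> 1 / r ^ n" for n using abs_Re_le_cmod[of "v n"] vb by simp
  have imb: "\<bar>Im (v n)\<bar> \<le> 1 / r ^ n" for n using abs_Im_le_cmod[of "v n"] vb by simp
  have reb: "\<bar>Re (v (Suc n))\<bar> \<le> (1/r) / r ^ n" for n using abs_Re_le_cmod[of "v (Suc n)"] vb[of "Suc n"] by simp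
  have imb: "\<bar>Im (v (Suc n))\<bar> \<le> (1/r) / r ^ n" for n using abs_Im_le_cmod[of "v (Suc n)"] vb[of "Suc n"] by simp
  have reb0: "\<bar>Re (v n)\<bar> \<le> 1 / r ^ n" for n using abs_Re_le_cmod[of "v n"] vb[of n] by simp
  have imb0: "\<bar>Im (v n)\<bar> \<le> 1 / r ^ n" for n using abs_Im_le_cmod[of "v n"] vb[of n] by simp
  define P where "P = (\<Sum>n. Re (v (Suc n)) *\<^sub>R bpow B n)"
  define Q where "Q = (\<Sum>n. Im (v (Suc n)) *\<^sub>R bpow B n)"
  have Ps: "(\<lambda>n. Re (v (Suc n)) *\<^sub>R bpow B n) sums P"
    unfolding P_def using coef_summable(1)[OF gz[folded r_def] reb] by (simp add: summable_sums)
  have Qs: "(\<lambda>n. Im (v (Suc n)) *\<^sub>R bpow B n) sums Q"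
    unfolding Q_def using coef_summable(1)[OF gz[folded r_def] imb] by (simp add: summable_sums)
  have c1: "(\<lambda>n. Re (v n) *\<^sub>R bpow B n) \<longlonglongrightarrow> 0" using coef_summable(2)[OF gz[folded r_def] reb0] .
  have c2: "(\<lambda>n. Im (v n) *\<^sub>R bpow B n) \<longlonglongrightarrow> 0" using coef_summable(2)[OF gz[folded r_def] imb0] .
  have q1: "Re z * Re (v (Suc n)) + (- Im z) * Im (v (Suc n)) = Re (v n)" for n
    using arg_cong[OF vS[of n], of Re] by simp
  have q2: "Im z * Re (v (Suc n)) + Re z * Im (v (Suc n)) = Im (v n)" for n
    using arg_cong[OF vS[of n], of Im] by (simp add: algebra_simps)
  have v0: "v 0 = 1" by (simp add: v_def)
  note T1 = tele_gen[OF Ps Qs Ps c1 q1 refl, unfolded v0]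
  note T2 = tele_gen[OF Ps Qs Qs c2 q2 refl, unfolded v0]
  have e1: "Re z *\<^sub>R P x - Im z *\<^sub>R Q x - B (P x) = x" for x
    using blinfun_apply_eq[OF T1(1), of x] by (simp add: blinfun.bilinear_simps)
  have e3: "Re z *\<^sub>R P x - Im z *\<^sub>R Q x - P (B x) = x" for x
    using blinfun_apply_eq[OF T1(2), of x] by (simp add: blinfun.bilinear_simps)
  have e2: "Im z *\<^sub>R P x + Re z *\<^sub>R Q x - B (Q x) = 0" for x
    using blinfun_apply_eq[OF T2(1), of x] by (simp add: blinfun.bilinear_simps)
  have e4: "Im z *\<^sub>R P x + Re z *\<^sub>R Q x - Q (B x) = 0" for x
    using blinfun_apply_eq[OF T2(2), of x] by (simp add: blinfun.bilinear_simps)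
  define S where "S = (\<lambda>p. (P (fst p) - Q (snd p), Q (fst p) + P (snd p)))"
  have blS: "bounded_linear S" unfolding S_def
    by (intro bounded_linear_Pair bounded_linear_sub bounded_linear_add
        bounded_linear_compose[OF blinfun.bounded_linear_right] bounded_linear_fst bounded_linear_snd)
  have "S (cshift B z (x, y)) = (x, y)" for x y
  proof -
    have "P (Re z *\<^sub>R x - Im z *\<^sub>R y - B x) - Q (Im z *\<^sub>R x + Re z *\<^sub>R y - B y)
        = (Re z *\<^sub>R P x - Im z *\<^sub>R Q x - P (B x)) - (Im z *\<^sub>R P y + Re z *\<^sub>R Q y - Q (B y))"
      by (simp add: blinfun.bilinear_simps algebra_simps)
    also have "\<dots> = x" using e3[of x] e4[of y] by simp
    finally have 1: "P (Re z *\<^sub>R x - Im z *\<^sub>R y - B x) - Q (Im z *\<^sub>R x + Re z *\<^sub>R y - B y) = x" .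
    have "Q (Re z *\<^sub>R x - Im z *\<^sub>R y - B x) + P (Im z *\<^sub>R x + Re z *\<^sub>R y - B y)
        = (Im z *\<^sub>R P x + Re z *\<^sub>R Q x - Q (B x)) + (Re z *\<^sub>R P y - Im z *\<^sub>R Q y - P (B y))"
      by (simp add: blinfun.bilinear_simps algebra_simps)
    also have "\<dots> = y" using e4[of x] e3[of y] by simp
    finally have 2: "Q (Re z *\<^sub>R x - Im z *\<^sub>R y - B x) + P (Im z *\<^sub>R x + Re z *\<^sub>R y - B y) = y" .
    show ?thesis using 1 2 by (simp add: S_def cshift_def)
  qed
  then have SL: "S \<circ> cshift B z = id" by (auto simp: fun_eq_iff)
  have "cshift B z (S (x, y)) = (x, y)" for x y
  proof -
    have "Re z *\<^sub>R (P x - Q y) - Im z *\<^sub>R (Q x + P y) - B (P x - Q y)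
        = (Re z *\<^sub>R P x - Im z *\<^sub>R Q x - B (P x)) - (Im z *\<^sub>R P y + Re z *\<^sub>R Q y - B (Q y))"
      by (simp add: blinfun.bilinear_simps algebra_simps)
    also have "\<dots> = x" using e1[of x] e2[of y] by simp
    finally have 1: "Re z *\<^sub>R (P x - Q y) - Im z *\<^sub>R (Q x + P y) - B (P x - Q y) = x" .
    have "Im z *\<^sub>R (P x - Q y) + Re z *\<^sub>R (Q x + P y) - B (Q x + P y)
        = (Im z *\<^sub>R P x + Re z *\<^sub>R Q x - B (Q x)) + (Re z *\<^sub>R P y - Im z *\<^sub>R Q y - B (P y))"
      by (simp add: blinfun.bilinear_simps algebra_simps)
    also have "\<dots> = y" using e2[of x] e1[of y] by simp
    finally have 2: "Im z *\<^sub>R (P x - Q y) + Re z *\<^sub>R (Q x + P y) - B (Q x + P y) = y" .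
    show ?thesis using 1 2 by (simp add: S_def cshift_def)
  qed
  then have SR: "cshift B z \<circ> S = id" by (auto simp: fun_eq_iff)
  show ?thesis unfolding cspectrum_def using blS SL SR by blast
qed

context ocone begin

lemma pos_neumann:
  assumes B: "pos B" and gl: "gr B < l" and l0: "l > 0"
  shows "pos (\<Sum>n. ((1/l)^(Suc n)) *\<^sub>R bpow B n)"
  using neumann(1)[OF gl l0] by (rule pos_sums) (use B l0 in \<open>auto intro!: pos_scaleR pos_bpow\<close>)

lemma in_cspectrum:
  assumes B: "pos B" and g0: "gr B > 0"
  shows "complex_of_real (gr B) \<in> cspectrum B"
proof (rule ccontr)
  define \<rho> where "\<rho> = gr B"
  have r0: "\<rho> > 0" using g0 by (simp add: \<rho>_def)
  assume "complex_of_real (gr B) \<notin> cspectrum B"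
  then obtain S where S: "bounded_linear S" "S \<circ> cshift B (complex_of_real \<rho>) = id" "cshift B (complex_of_real \<rho>) \<circ> S = id"
    unfolding cspectrum_def \<rho>_def by blast
  have cs: "cshift B (complex_of_real \<rho>) (x, y) = (\<rho> *\<^sub>R x - B x, \<rho> *\<^sub>R y - B y)" for x y
    by (simp add: cshift_def)
  have blR: "bounded_linear (\<lambda>x. fst (S (x, 0)))"
    by (intro bounded_linear_compose[OF bounded_linear_fst] bounded_linear_compose[OF S(1)]
        bounded_linear_Pair bounded_linear_ident bounded_linear_zero)
  define R0 where "R0 = Blinfun (\<lambda>x. fst (S (x, 0)))"
  have R0x: "R0 x = fst (S (x, 0))" for x unfolding R0_def using bounded_linear_Blinfun_apply[OF blR] by simp
  have inv1: "R0 o\<^sub>L (\<rho> *\<^sub>R id_blinfun - B) = id_blinfun"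
  proof (rule blinfun_eqI)
    fix x
    have "S (cshift B (complex_of_real \<rho>) (x, 0)) = (x, 0)" using S(2) by (simp add: fun_eq_iff)
    then have h: "R0 (\<rho> *\<^sub>R x - B x) = x" by (simp add: R0x cs)
    have h2: "(\<rho> *\<^sub>R id_blinfun - B) x = \<rho> *\<^sub>R x - B x" by (simp add: blinfun.bilinear_simps)
    show "blinfun_apply (R0 o\<^sub>L (\<rho> *\<^sub>R id_blinfun - B)) x = blinfun_apply id_blinfun x"
      by (simp only: blinfun_apply_blinfun_compose h2 h blinfun_apply_id_blinfun)
  qed
  have inv2: "(\<rho> *\<^sub>R id_blinfun - B) o\<^sub>L R0 = id_blinfun"
  proof (rule blinfun_eqI)
    fix x
    obtain a b where ab: "S (x, 0) = (a, b)" by force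
    have "cshift B (complex_of_real \<rho>) (S (x, 0)) = (x, 0)" using S(3) by (simp add: fun_eq_iff)
    then have "\<rho> *\<^sub>R a - B a = x" using ab cs by simp
    then show "blinfun_apply ((\<rho> *\<^sub>R id_blinfun - B) o\<^sub>L R0) x = blinfun_apply id_blinfun x"
      by (simp add: R0x ab blinfun.bilinear_simps)
  qed
  have posR0: "pos R0"
    unfolding pos_def
  proof
    fix u assume u: "u \<in> K"
    have "\<exists>y\<in>K. dist y (R0 u) < \<epsilon>" if e: "\<epsilon> > 0" for \<epsilon>
    proof -
      define a where "a = norm R0"
      define b where "b = norm (R0 u)"
      have a0: "a \<ge> 0" "b \<ge> 0" by (auto simp: a_def b_def)
      define \<delta> where "\<delta> = min (1 / (2 * (a + 1))) (\<epsilon> / (2 * (a + 1) * (b + 1)))"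
      have d0: "\<delta> > 0" using a0 e by (simp add: \<delta>_def)
      define l where "l = \<rho> + \<delta>"
      have gl: "gr B < l" "l > 0" using d0 r0 by (auto simp: l_def \<rho>_def)
      define W where "W = (\<Sum>n. ((1/l)^(Suc n)) *\<^sub>R bpow B n)"
      have Wi: "W o\<^sub>L (l *\<^sub>R id_blinfun - B) = id_blinfun"
        using neumann(2)[OF gl] unfolding W_def .
      have posW: "pos W" unfolding W_def by (rule pos_neumann[OF B gl])
      have Wx: "W x = R0 x - \<delta> *\<^sub>R W (R0 x)" for x
      proof -
        have "x = \<rho> *\<^sub>R R0 x - B (R0 x)" using blinfun_apply_eq[OF inv2, of x] by (simp add: blinfun.bilinear_simps)
        also have "\<dots> = (l *\<^sub>R R0 x - B (R0 x)) - \<delta> *\<^sub>R R0 x" by (simp add: l_def algebra_simps)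
        finally have "W x = W (l *\<^sub>R R0 x - B (R0 x)) - \<delta> *\<^sub>R W (R0 x)"
          by (metis blinfun.diff_right blinfun.scaleR_right)
        also have "W (l *\<^sub>R R0 x - B (R0 x)) = R0 x"
          using blinfun_apply_eq[OF Wi, of "R0 x"] by (simp add: blinfun.bilinear_simps)
        finally show ?thesis .
      qed
      have "W = R0 - \<delta> *\<^sub>R (W o\<^sub>L R0)" by (rule blinfun_eqI, subst Wx) (simp add: blinfun.bilinear_simps)
      then have "norm W = norm (R0 - \<delta> *\<^sub>R (W o\<^sub>L R0))" by simp
      also have "\<dots> \<le> norm R0 + norm (\<delta> *\<^sub>R (W o\<^sub>L R0))" by (rule norm_triangle_ineq4)
      also have "\<dots> = a + \<delta> * norm (W o\<^sub>L R0)" using d0 by (simp add: a_def)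
      also have "\<dots> \<le> a + \<delta> * (norm W * a)" unfolding a_def using d0
        by (intro add_left_mono mult_left_mono norm_blinfun_compose) auto
      finally have nW1: "norm W \<le> a + \<delta> * (norm W * a)" .
      have da: "\<delta> * a \<le> 1/2"
      proof -
        have "\<delta> * a \<le> (1 / (2 * (a + 1))) * a" using a0 d0 by (intro mult_right_mono) (auto simp: \<delta>_def)
        also have "\<dots> \<le> 1/2" using a0 by (simp add: field_simps)
        finally show ?thesis .
      qed
      then have "(\<delta> * a) * norm W \<le> (1/2) * norm W" by (intro mult_right_mono) auto
      then have "\<delta> * (norm W * a) \<le> norm W / 2" by (simp add: algebra_simps)
      with nW1 have nW: "norm W \<le> 2 * a" by linarith
      have "dist (W u) (R0 u) = \<delta> * norm (W (R0 u))" using d0 by (subst Wx) (simp add: dist_norm)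
      also have "\<dots> \<le> \<delta> * (norm W * b)" using d0 by (intro mult_left_mono) (auto simp: b_def norm_blinfun)
      also have "\<dots> \<le> \<delta> * (2 * a * b)" using d0 nW a0 by (intro mult_left_mono mult_right_mono) auto
      also have "\<dots> \<le> (\<epsilon> / (2 * (a + 1) * (b + 1))) * (2 * a * b)" using a0 by (intro mult_right_mono) (auto simp: \<delta>_def)
      also have "\<dots> < \<epsilon>"
      proof -
        have "2 * a * b < 2 * (a + 1) * (b + 1)" using a0 by (simp add: algebra_simps) 
        moreover have Y: "0 < 2 * (a + 1) * (b + 1)" using a0 by (simp add: add_nonneg_pos)
        ultimately have "(\<epsilon> / (2 * (a + 1) * (b + 1))) * (2 * a * b) < (\<epsilon> / (2 * (a + 1) * (b + 1))) * (2 * (a + 1) * (b + 1))"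
          using e by (intro mult_strict_left_mono) auto
        also have "\<dots> = \<epsilon>" using Y by (metis less_irrefl nonzero_eq_divide_eq)
        finally show ?thesis .
      qed
      finally have "dist (W u) (R0 u) < \<epsilon>" .
      moreover have "W u \<in> K" using posW u by (rule posD)
      ultimately show ?thesis by blast
    qed
    then show "R0 u \<in> K" using closed_approachable[OF closedK] by blast
  qed
  have "gr B < \<rho>" using Lstrict[OF B r0 posR0 inv1 inv2] .
  then show False by (simp add: \<rho>_def)
qed

lemma spec_rad_eq:
  assumes B: "pos B"
  shows "spec_rad B = gr B"
proof -
  define S where "S = cmod ` cspectrum B"
  have Sle: "s \<le> gr B" if "s \<in> S" for s
    using that not_in_cspectrum[of B] unfolding S_def by force
  have bdd: "bdd_above (insert 0 S)" using Sle gr_nonneg[of B] by (auto intro!: bdd_aboveI[of _ "gr B"])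
  have "Sup (insert 0 S) \<le> gr B" using Sle gr_nonneg[of B] by (intro cSup_least) auto
  moreover have "gr B \<le> Sup (insert 0 S)"
  proof (cases "gr B > 0")
    case True
    then have "gr B \<in> S" unfolding S_def using in_cspectrum[OF B True]
      by (metis gr_nonneg image_eqI norm_of_real abs_of_nonneg)
    then show ?thesis using bdd by (intro cSup_upper) auto
  next
    case False
    then have "gr B = 0" using gr_nonneg[of B] by linarith
    then show ?thesis using bdd by (simp add: cSup_upper)
  qed
  ultimately show ?thesis unfolding spec_rad_def S_def by simp
qed

end

context ocone begin

lemma pos_le_pow:
  assumes B: "pos B" and CB: "pos (C - B)"
  shows "pos (bpow C n - bpow B n)"
proof (induction n)
  case 0 then show ?case by (simp add: pos_def zeroK)
next
  case (Suc n)
  have C: "pos C"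
  proof -
    have "C = (C - B) + B" by simp
    then show ?thesis using pos_add[OF CB B] by metis
  qed
  show ?case unfolding pos_def
  proof
    fix u assume u: "u \<in> K"
    have "(bpow C (Suc n) - bpow B (Suc n)) u = C ((bpow C n - bpow B n) u) + (C - B) (bpow B n u)"
      by (simp add: blinfun.bilinear_simps)
    also have "\<dots> \<in> K" using u Suc C CB B by (intro addK posD[OF C] posD[OF CB] posD[OF pos_bpow[OF B]]) (auto simp: posD)
    finally show "(bpow C (Suc n) - bpow B (Suc n)) u \<in> K" .
  qed
qed

lemma gr_mono:
  assumes B: "pos B" and CB: "pos (C - B)"
  shows "gr B \<le> gr C"
proof (rule dense_ge)
  fix \<eta> assume eta: "gr C < \<eta>"
  then have eta0: "\<eta> > 0" using gr_nonneg[of C] by linarith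
  obtain M where M: "\<And>n. norm (bpow C n) \<le> M * \<eta> ^ n" using gr_bound[OF eta] by blast
  show "gr B \<le> \<eta>"
  proof (rule gr_le_K[OF eta0])
    fix u assume u: "u \<in> K"
    have "norm (bpow B n u) \<le> (gam * M * norm u) * \<eta> ^ n" for n
    proof -
      have "bpow B n u \<in> K" using u B by (simp add: posD pos_bpow)
      moreover have "bpow C n u - bpow B n u \<in> K" using posD[OF pos_le_pow[OF B CB] u, of n]
        by (simp add: blinfun.bilinear_simps)
      ultimately have "norm (bpow B n u) \<le> gam * norm (bpow C n u)" by (rule gam(2))
      also have "\<dots> \<le> gam * (norm (bpow C n) * norm u)" using gam(1) by (intro mult_left_mono norm_blinfun) auto
      also have "\<dots> \<le> gam * ((M * \<eta> ^ n) * norm u)" using gam(1) M by (intro mult_left_mono mult_right_mono) auto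
      finally show ?thesis by (simp add: algebra_simps)
    qed
    then show "\<exists>C. \<forall>n. norm (bpow B n u) \<le> C * \<eta> ^ n" by blast
  qed
qed

definition Res :: "('a \<Rightarrow>\<^sub>L 'a) \<Rightarrow> real \<Rightarrow> ('a \<Rightarrow>\<^sub>L 'a)" where
  "Res T l = (\<Sum>n. ((1/l)^(Suc n)) *\<^sub>R bpow T n)"

lemma Res:
  assumes T: "pos T" and l: "gr T < l"
  shows "Res T l o\<^sub>L (l *\<^sub>R id_blinfun - T) = id_blinfun"
    "(l *\<^sub>R id_blinfun - T) o\<^sub>L Res T l = id_blinfun"
    "pos (Res T l)" "op_inv (l *\<^sub>R id_blinfun - T) = Res T l"
proof -
  have l0: "l > 0" using gr_nonneg[of T] l by linarith
  show 1: "Res T l o\<^sub>L (l *\<^sub>R id_blinfun - T) = id_blinfun" using neumann(2)[OF l l0] by (simp add: Res_def)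
  show 2: "(l *\<^sub>R id_blinfun - T) o\<^sub>L Res T l = id_blinfun" using neumann(3)[OF l l0] by (simp add: Res_def)
  show "pos (Res T l)" using pos_neumann[OF T l l0] by (simp add: Res_def)
  show "op_inv (l *\<^sub>R id_blinfun - T) = Res T l" using op_inv_eq[OF 1 2] .
qed

lemma Res_ap1: "pos T \<Longrightarrow> gr T < l \<Longrightarrow> Res T l (l *\<^sub>R x - T x) = x"
  using blinfun_apply_eq[OF Res(1), of T l x] by (simp add: blinfun.bilinear_simps)
lemma Res_ap2: "pos T \<Longrightarrow> gr T < l \<Longrightarrow> l *\<^sub>R Res T l x - T (Res T l x) = x"
  using blinfun_apply_eq[OF Res(2), of T l x] by (simp add: blinfun.bilinear_simps)

lemma Res_mono:
  assumes T: "pos T" and l1: "gr T < l1" and l12: "l1 \<le> l2"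
  shows "pos (Res T l1 - Res T l2)"
proof -
  have l2: "gr T < l2" using l1 l12 by linarith
  have eq: "(Res T l1 - Res T l2) x = (l2 - l1) *\<^sub>R Res T l1 (Res T l2 x)" for x
  proof -
    define y where "y = Res T l2 x"
    have x: "x = l2 *\<^sub>R y - T y" using Res_ap2[OF T l2] by (simp add: y_def)
    have "Res T l1 x = Res T l1 ((l1 *\<^sub>R y - T y) + (l2 - l1) *\<^sub>R y)"
      by (subst x) (simp add: algebra_simps)
    also have "\<dots> = y + (l2 - l1) *\<^sub>R Res T l1 y"
      by (simp only: blinfun.add_right blinfun.scaleR_right Res_ap1[OF T l1])
    finally show ?thesis by (simp add: y_def blinfun.bilinear_simps)
  qed
  show ?thesis unfolding pos_def
  proof
    fix u assume "u \<in> K"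
    then show "(Res T l1 - Res T l2) u \<in> K" unfolding eq using l12 Res(3)[OF T l1] Res(3)[OF T l2]
      by (intro scalK posD) auto
  qed
qed

lemma FR_eq: "pos T \<Longrightarrow> gr T < l \<Longrightarrow> FR F T l = F o\<^sub>L Res T l"
  by (simp add: FR_def Res(4))

lemma FR_pos: "pos T \<Longrightarrow> pos F \<Longrightarrow> gr T < l \<Longrightarrow> pos (FR F T l)"
  by (simp add: FR_eq pos_comp Res(3))

lemma FR_mono:
  assumes T: "pos T" and F: "pos F" and l1: "gr T < l1" and l12: "l1 \<le> l2"
  shows "gr (FR F T l2) \<le> gr (FR F T l1)"
proof (rule gr_mono)
  have l2: "gr T < l2" using l1 l12 by linarith
  show "pos (FR F T l2)" using FR_pos[OF T F l2] .
  have "FR F T l1 - FR F T l2 = F o\<^sub>L (Res T l1 - Res T l2)"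
    by (simp add: FR_eq[OF T l1] FR_eq[OF T l2] blinfun_eqI blinfun.bilinear_simps)
  then show "pos (FR F T l1 - FR F T l2)" using pos_comp[OF F Res_mono[OF T l1 l12]] by simp
qed

end

context ocone begin

lemma key:
  assumes T: "pos T" and F: "pos F" and l: "gr T < l"
  shows "gr (FR F T l) < 1 \<longleftrightarrow> gr (T + F) < l"
proof -
  have l0: "l > 0" using gr_nonneg[of T] l by linarith
  define R where "R = Res T l"
  have A: "pos (T + F)" using T F by (rule pos_add)
  have R1: "R (l *\<^sub>R x - T x) = x" for x using Res_ap1[OF T l] by (simp add: R_def)
  have R2: "l *\<^sub>R R x - T (R x) = x" for x using Res_ap2[OF T l] by (simp add: R_def)
  have posR: "pos R" using Res(3)[OF T l] by (simp add: R_def)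
  have FR: "FR F T l = F o\<^sub>L R" using FR_eq[OF T l] by (simp add: R_def)
  show ?thesis
  proof
    assume g: "gr (FR F T l) < 1"
    define B where "B = F o\<^sub>L R"
    have gB: "gr B < 1" using g FR by (simp add: B_def)
    define N where "N = (\<Sum>n. ((1/1)^(Suc n)) *\<^sub>R bpow B n)"
    have N1: "N (x - B x) = x" for x
      using blinfun_apply_eq[OF neumann(2)[OF gB, folded N_def], of x] by (simp add: blinfun.bilinear_simps)
    have N2: "N x - B (N x) = x" for x
      using blinfun_apply_eq[OF neumann(3)[OF gB, folded N_def], of x] by (simp add: blinfun.bilinear_simps)
    have posB: "pos B" unfolding B_def using F posR by (rule pos_comp)
    have posN: "pos N" unfolding N_def using pos_neumann[OF posB gB] by simp
    define W where "W = R o\<^sub>L N"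
    have W1: "W o\<^sub>L (l *\<^sub>R id_blinfun - (T + F)) = id_blinfun"
    proof (rule blinfun_eqI)
      fix x
      have h: "B (l *\<^sub>R x - T x) = F x" by (simp only: B_def blinfun_apply_blinfun_compose R1)
      have e: "(l *\<^sub>R id_blinfun - (T + F)) x = (l *\<^sub>R x - T x) - B (l *\<^sub>R x - T x)"
        by (subst h) (simp add: blinfun.bilinear_simps)
      show "blinfun_apply (W o\<^sub>L (l *\<^sub>R id_blinfun - (T + F))) x = blinfun_apply id_blinfun x"
        unfolding W_def by (simp only: blinfun_apply_blinfun_compose e N1 R1 blinfun_apply_id_blinfun)
    qed
    have W2: "(l *\<^sub>R id_blinfun - (T + F)) o\<^sub>L W = id_blinfun"
    proof (rule blinfun_eqI)
      fix x
      have "l *\<^sub>R R (N x) - (T (R (N x)) + F (R (N x))) = N x - B (N x)"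
        using R2[of "N x"] by (simp add: B_def algebra_simps)
      also have "\<dots> = x" by (rule N2)
      finally have e: "(l *\<^sub>R id_blinfun - (T + F)) (R (N x)) = x" by (simp add: blinfun.bilinear_simps)
      show "blinfun_apply ((l *\<^sub>R id_blinfun - (T + F)) o\<^sub>L W) x = blinfun_apply id_blinfun x"
        unfolding W_def by (simp only: blinfun_apply_blinfun_compose e blinfun_apply_id_blinfun)
    qed
    have posW: "pos W" unfolding W_def using posR posN by (rule pos_comp)
    show "gr (T + F) < l" using Lstrict[OF A l0 posW W1 W2] .
  next
    assume gA: "gr (T + F) < l"
    define RA where "RA = Res (T + F) l"
    have RA1: "RA (l *\<^sub>R x - (T x + F x)) = x" for x using Res_ap1[OF A gA] by (simp add: RA_def blinfun.bilinear_simps)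
    have RA2: "l *\<^sub>R RA x - (T (RA x) + F (RA x)) = x" for x using Res_ap2[OF A gA] by (simp add: RA_def blinfun.bilinear_simps)
    have posRA: "pos RA" using Res(3)[OF A gA] by (simp add: RA_def)
    have i1: "R (F (RA x)) = RA x - R x" for x
    proof -
      have "x = (l *\<^sub>R RA x - T (RA x)) - F (RA x)" using RA2[of x] by (simp add: algebra_simps)
      then have "R x = R (l *\<^sub>R RA x - T (RA x)) - R (F (RA x))"
        by (metis blinfun.diff_right)
      then show ?thesis using R1[of "RA x"] by simp
    qed
    have i2: "RA (F (R x)) = RA x - R x" for x
    proof -
      have "x = (l *\<^sub>R R x - (T (R x) + F (R x))) + F (R x)" using R2[of x] by (simp add: algebra_simps)
      then have "RA x = RA (l *\<^sub>R R x - (T (R x) + F (R x))) + RA (F (R x))"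
        by (metis blinfun.add_right)
      then show ?thesis using RA1[of "R x"] by simp
    qed
    define W where "W = id_blinfun + (F o\<^sub>L RA)"
    have posW: "pos W" unfolding W_def using pos_id pos_comp[OF F posRA] by (rule pos_add)
    have W1: "W o\<^sub>L (1 *\<^sub>R id_blinfun - FR F T l) = id_blinfun"
    proof (rule blinfun_eqI)
      fix x
      show "blinfun_apply (W o\<^sub>L (1 *\<^sub>R id_blinfun - FR F T l)) x = blinfun_apply id_blinfun x"
        by (simp add: W_def FR blinfun.bilinear_simps i2)
    qed
    have W2: "(1 *\<^sub>R id_blinfun - FR F T l) o\<^sub>L W = id_blinfun"
    proof (rule blinfun_eqI)
      fix x
      show "blinfun_apply ((1 *\<^sub>R id_blinfun - FR F T l) o\<^sub>L W) x = blinfun_apply id_blinfun x"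
        by (simp add: W_def FR blinfun.bilinear_simps i1)
    qed
    show "gr (FR F T l) < 1" using Lstrict[OF FR_pos[OF T F l] _ posW W1 W2] by simp
  qed
qed

end

lemma sc:
  fixes l m t s :: real
  assumes l: "l > 0" and m: "m > 0" and t: "0 < t" "t < 1"
  shows "(1/((1-t)*l + t*m))^k \<le> (1-t) * (exp (t * s) * (1/l)^k) + t * (exp (-(1-t) * s) * (1/m)^k)"
proof -
  have cv: "exp ((1-t)*a + t*b) \<le> (1-t) * exp a + t * exp b" for a b
    using convex_onD[OF exp_convex, of t a b] t by simp
  define g where "g = (1-t) * ln l + t * ln m"
  have "exp g \<le> (1-t) * exp (ln l) + t * exp (ln m)" unfolding g_def by (rule cv)
  then have "exp g \<le> (1-t)*l + t*m" using l m by simp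
  then have gle: "g \<le> ln ((1-t)*l + t*m)" using l m t
    by (metis exp_le_cancel_iff exp_ln add_pos_pos mult_pos_pos diff_gt_0_iff_gt)
  have nu: "(1-t)*l + t*m > 0" using l m t by (intro add_pos_pos mult_pos_pos) auto
  have "(1/((1-t)*l + t*m))^k = exp (real k * (- ln ((1-t)*l + t*m)))"
    using nu by (simp add: exp_of_nat_mult exp_minus inverse_eq_divide power_one_over)
  also have "\<dots> \<le> exp (real k * (- g))" using gle by (intro exp_mono mult_left_mono) auto
  also have "real k * (- g) = (1-t) * (t * s + real k * ln (1/l)) + t * (-(1-t) * s + real k * ln (1/m))"
    unfolding g_def using l m by (simp add: ln_div algebra_simps)
  also have "exp \<dots> \<le> (1-t) * exp (t * s + real k * ln (1/l)) + t * exp (-(1-t) * s + real k * ln (1/m))"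
    by (rule cv)
  also have "exp (t * s + real k * ln (1/l)) = exp (t * s) * (1/l)^k"
    using l by (simp add: exp_add exp_of_nat_mult)
  also have "exp (-(1-t) * s + real k * ln (1/m)) = exp (-(1-t) * s) * (1/m)^k"
    using m by (simp add: exp_add exp_of_nat_mult)
  finally show ?thesis by simp
qed

lemma comp_add_l: "(A + B) o\<^sub>L C = (A o\<^sub>L C) + (B o\<^sub>L C)" by (rule blinfun_eqI) (simp add: blinfun.bilinear_simps)
lemma comp_add_r: "A o\<^sub>L (B + C) = (A o\<^sub>L B) + (A o\<^sub>L C)" by (rule blinfun_eqI) (simp add: blinfun.bilinear_simps)
lemma comp_scale_l: "(c *\<^sub>R A) o\<^sub>L C = c *\<^sub>R (A o\<^sub>L C)" by (rule blinfun_eqI) (simp add: blinfun.bilinear_simps)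
lemma comp_scale_r: "A o\<^sub>L (c *\<^sub>R C) = c *\<^sub>R (A o\<^sub>L C)" by (rule blinfun_eqI) (simp add: blinfun.bilinear_simps)
lemma comp_zero_l: "0 o\<^sub>L C = 0" by (rule blinfun_eqI) simp

definition ev :: "(nat \<times> ('a::real_normed_vector \<Rightarrow>\<^sub>L 'a)) list \<Rightarrow> real \<Rightarrow> ('a \<Rightarrow>\<^sub>L 'a)" where
  "ev xs v = sum_list (map (\<lambda>p. ((1/v)^(fst p)) *\<^sub>R snd p) xs)"

lemma ev_Nil[simp]: "ev [] v = 0" by (simp add: ev_def)
lemma ev_Cons[simp]: "ev (p # xs) v = ((1/v)^(fst p)) *\<^sub>R snd p + ev xs v" by (simp add: ev_def)
lemma ev_append[simp]: "ev (xs @ ys) v = ev xs v + ev ys v" by (simp add: ev_def)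

definition mulL :: "(nat \<times> ('a::real_normed_vector \<Rightarrow>\<^sub>L 'a)) list \<Rightarrow> (nat \<times> ('a \<Rightarrow>\<^sub>L 'a)) list \<Rightarrow> (nat \<times> ('a \<Rightarrow>\<^sub>L 'a)) list" where
  "mulL xs ys = concat (map (\<lambda>p. map (\<lambda>q. (fst p + fst q, snd p o\<^sub>L snd q)) ys) xs)"

lemma ev_map1: "ev (map (\<lambda>q. (fst p + fst q, snd p o\<^sub>L snd q)) ys) v = (((1/v)^(fst p)) *\<^sub>R snd p) o\<^sub>L ev ys v"
  by (induction ys) (simp_all add: comp_add_r comp_scale_l comp_scale_r power_add)

lemma ev_mul: "ev (mulL xs ys) v = ev xs v o\<^sub>L ev ys v"
  by (induction xs) (simp_all add: mulL_def ev_map1 comp_add_l comp_zero_l)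

primrec pw :: "nat \<Rightarrow> (nat \<times> ('a::real_normed_vector \<Rightarrow>\<^sub>L 'a)) list \<Rightarrow> (nat \<times> ('a \<Rightarrow>\<^sub>L 'a)) list" where
  "pw 0 xs = [(0, id_blinfun)]"
| "pw (Suc n) xs = mulL xs (pw n xs)"

lemma ev_pw: "ev (pw n xs) v = bpow (ev xs v) n"
  by (induction n) (simp_all add: ev_mul)

lemma set_mulL: "r \<in> set (mulL xs ys) \<Longrightarrow> \<exists>p\<in>set xs. \<exists>q\<in>set ys. snd r = snd p o\<^sub>L snd q"
  by (auto simp: mulL_def) (metis snd_conv)

lemma tendsto_bpow: "(f \<longlongrightarrow> L) F \<Longrightarrow> ((\<lambda>x. bpow (f x) n) \<longlongrightarrow> bpow L n) F"
  by (induction n) (auto intro: bounded_bilinear.tendsto[OF bounded_bilinear_blinfun_compose])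

definition Sm :: "('a::real_normed_vector \<Rightarrow>\<^sub>L 'a) \<Rightarrow> ('a \<Rightarrow>\<^sub>L 'a) \<Rightarrow> nat \<Rightarrow> (nat \<times> ('a \<Rightarrow>\<^sub>L 'a)) list" where
  "Sm F T m = map (\<lambda>k. (Suc k, F o\<^sub>L bpow T k)) [0..<m]"

lemma ev_Sm: "ev (Sm F T m) v = F o\<^sub>L (\<Sum>k<m. ((1/v)^(Suc k)) *\<^sub>R bpow T k)"
  by (induction m) (simp_all add: Sm_def comp_add_r comp_scale_r)

context ocone begin

definition good where "good xs \<longleftrightarrow> (\<forall>p\<in>set xs. pos (snd p))"

lemma good_mul: "good xs \<Longrightarrow> good ys \<Longrightarrow> good (mulL xs ys)"
  unfolding good_def
proof (intro ballI)
  fix r assume "\<forall>p\<in>set xs. pos (snd p)" "\<forall>p\<in>set ys. pos (snd p)" "r \<in> set (mulL xs ys)"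
  then show "pos (snd r)" using set_mulL[of r xs ys] pos_comp by fastforce
qed

lemma good_base: "good [(0, id_blinfun)]" by (simp add: good_def pos_id)

lemma good_pw: assumes g: "good xs" shows "good (pw n xs)"
proof (induction n)
  case 0 show ?case by (simp add: good_base)
next
  case (Suc n) then show ?case by (simp add: good_mul g)
qed

lemma good_Sm: "pos F \<Longrightarrow> pos T \<Longrightarrow> good (Sm F T m)"
  by (auto simp: good_def Sm_def pos_comp pos_bpow)

lemma ev_ineq:
  assumes g: "good xs" and u: "u \<in> K" and l: "l > 0" and m: "m > 0" and t: "0 < t" "t < 1"
  shows "((1-t) * exp (t * s)) *\<^sub>R ev xs l u + (t * exp (-(1-t) * s)) *\<^sub>R ev xs m u - ev xs ((1-t)*l + t*m) u \<in> K"
  using g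
proof (induction xs)
  case Nil then show ?case by (simp add: zeroK)
next
  case (Cons p xs)
  define k where "k = fst p"
  define Q where "Q = snd p"
  have gx: "good xs" and pQ: "pos Q" using Cons.prems by (auto simp: good_def Q_def)
  define c where "c = (1-t) * (exp (t * s) * (1/l)^k) + t * (exp (-(1-t) * s) * (1/m)^k) - (1/((1-t)*l + t*m))^k"
  have c0: "c \<ge> 0" using sc[OF l m t, of k s] by (simp add: c_def)
  have "((1-t) * exp (t * s)) *\<^sub>R ev (p # xs) l u + (t * exp (-(1-t) * s)) *\<^sub>R ev (p # xs) m u - ev (p # xs) ((1-t)*l + t*m) u
      = c *\<^sub>R Q u + (((1-t) * exp (t * s)) *\<^sub>R ev xs l u + (t * exp (-(1-t) * s)) *\<^sub>R ev xs m u - ev xs ((1-t)*l + t*m) u)"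
    by (simp add: c_def k_def Q_def blinfun.bilinear_simps algebra_simps)
  also have "\<dots> \<in> K" using Cons.IH[OF gx] c0 u pQ by (intro addK scalK posD) auto
  finally show ?case .
qed

end

context ocone begin

lemma ev_lim:
  assumes T: "pos T" and v: "gr T < v"
  shows "(\<lambda>M. ev (pw n (Sm F T M)) v u) \<longlonglongrightarrow> bpow (FR F T v) n u"
proof -
  have v0: "v > 0" using gr_nonneg[of T] v by linarith
  have "(\<lambda>M. \<Sum>k<M. ((1/v)^(Suc k)) *\<^sub>R bpow T k) \<longlonglongrightarrow> Res T v"
    using neumann(1)[OF v v0] unfolding Res_def sums_def .
  then have "(\<lambda>M. F o\<^sub>L (\<Sum>k<M. ((1/v)^(Suc k)) *\<^sub>R bpow T k)) \<longlonglongrightarrow> (F o\<^sub>L Res T v)"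
    by (rule bounded_linear.tendsto[OF blinfun_compose_bl_right])
  then have "(\<lambda>M. ev (Sm F T M) v) \<longlonglongrightarrow> FR F T v" by (simp add: ev_Sm FR_eq[OF T v])
  then have "(\<lambda>M. bpow (ev (Sm F T M) v) n) \<longlonglongrightarrow> bpow (FR F T v) n" by (rule tendsto_bpow)
  then have "(\<lambda>M. bpow (ev (Sm F T M) v) n u) \<longlonglongrightarrow> bpow (FR F T v) n u"
    by (rule bounded_linear.tendsto[OF blinfun.bounded_linear_left])
  then show ?thesis by (simp add: ev_pw)
qed

lemma nu_gt:
  assumes l: "gr T < l" and m: "gr T < m" and t: "0 < t" "t < 1"
  shows "gr T < (1-t)*l + t*m"
proof -
  have "(1-t)*l + t*m > (1-t) * gr T + t * gr T" using l m t
    by (intro add_strict_mono mult_strict_left_mono) auto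
  then show ?thesis by (simp add: algebra_simps)
qed

lemma vec_ineq:
  assumes T: "pos T" and F: "pos F" and l: "gr T < l" and m: "gr T < m" and t: "0 < t" "t < 1" and u: "u \<in> K"
  shows "((1-t) * exp (t * s)) *\<^sub>R bpow (FR F T l) n u + (t * exp (-(1-t) * s)) *\<^sub>R bpow (FR F T m) n u
         - bpow (FR F T ((1-t)*l + t*m)) n u \<in> K"
proof -
  have l0: "l > 0" and m0: "m > 0" using gr_nonneg[of T] l m by linarith+
  have nu: "gr T < (1-t)*l + t*m"
  proof -
    have "(1-t)*l + t*m > (1-t) * gr T + t * gr T" using l m t
      by (intro add_strict_mono mult_strict_left_mono) auto
    then show ?thesis by (simp add: algebra_simps)
  qed
  have lim: "(\<lambda>M. ((1-t) * exp (t * s)) *\<^sub>R ev (pw n (Sm F T M)) l u + (t * exp (-(1-t) * s)) *\<^sub>R ev (pw n (Sm F T M)) m u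
         - ev (pw n (Sm F T M)) ((1-t)*l + t*m) u) \<longlonglongrightarrow>
        ((1-t) * exp (t * s)) *\<^sub>R bpow (FR F T l) n u + (t * exp (-(1-t) * s)) *\<^sub>R bpow (FR F T m) n u
         - bpow (FR F T ((1-t)*l + t*m)) n u"
    by (intro tendsto_intros ev_lim T l m nu)
  have mem: "((1-t) * exp (t * s)) *\<^sub>R ev (pw n (Sm F T M)) l u + (t * exp (-(1-t) * s)) *\<^sub>R ev (pw n (Sm F T M)) m u
         - ev (pw n (Sm F T M)) ((1-t)*l + t*m) u \<in> K" for M
    by (rule ev_ineq[OF good_pw[OF good_Sm[OF F T]] u l0 m0 t])
  show ?thesis using lim_in_K[OF mem lim] .
qed

lemma conv_pt:
  assumes T: "pos T" and F: "pos F" and l: "gr T < l" and m: "gr T < m" and t: "0 < t" "t < 1"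
  shows "gr (FR F T ((1-t)*l + t*m)) \<le> (1-t) * gr (FR F T l) + t * gr (FR F T m)"
proof (rule field_le_epsilon)
  fix e :: real assume e: "e > 0"
  define \<eta>1 where "\<eta>1 = gr (FR F T l) + e"
  define \<eta>2 where "\<eta>2 = gr (FR F T m) + e"
  have e1: "gr (FR F T l) < \<eta>1" "\<eta>1 > 0" using e gr_nonneg[of "FR F T l"] by (auto simp: \<eta>1_def)
  have e2: "gr (FR F T m) < \<eta>2" "\<eta>2 > 0" using e gr_nonneg[of "FR F T m"] by (auto simp: \<eta>2_def)
  obtain C1 where C1: "\<And>n. norm (bpow (FR F T l) n) \<le> C1 * \<eta>1 ^ n" using gr_bound[OF e1(1)] by blast
  obtain C2 where C2: "\<And>n. norm (bpow (FR F T m) n) \<le> C2 * \<eta>2 ^ n" using gr_bound[OF e2(1)] by blast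
  have "norm (id_blinfun :: 'a \<Rightarrow>\<^sub>L 'a) \<le> C1" using C1[of 0] by simp
  then have C10: "C1 \<ge> 0" by (rule order_trans[OF norm_ge_zero])
  have "norm (id_blinfun :: 'a \<Rightarrow>\<^sub>L 'a) \<le> C2" using C2[of 0] by simp
  then have C20: "C2 \<ge> 0" by (rule order_trans[OF norm_ge_zero])
  define L1 where "L1 = ln \<eta>1"
  define L2 where "L2 = ln \<eta>2"
  define \<theta> where "\<theta> = exp ((1-t) * L1 + t * L2)"
  have th0: "\<theta> > 0" by (simp add: \<theta>_def)
  have "gr (FR F T ((1-t)*l + t*m)) \<le> \<theta>"
  proof (rule gr_le_K[OF th0])
    fix u assume u: "u \<in> K"
    have "norm (bpow (FR F T ((1-t)*l + t*m)) n u) \<le> (gam * (C1 + C2) * norm u) * \<theta> ^ n" for n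
    proof -
      define s where "s = real n * (L2 - L1)"
      define a where "a = (1-t) * exp (t * s)"
      define b where "b = t * exp (-(1-t) * s)"
      have a0: "a \<ge> 0" "b \<ge> 0" using t by (auto simp: a_def b_def)
      have x: "bpow (FR F T ((1-t)*l + t*m)) n u \<in> K"
        using u by (intro posD[OF pos_bpow] FR_pos T F nu_gt l m t)
      have y: "(a *\<^sub>R bpow (FR F T l) n u + b *\<^sub>R bpow (FR F T m) n u) - bpow (FR F T ((1-t)*l + t*m)) n u \<in> K"
        unfolding a_def b_def by (rule vec_ineq[OF T F l m t u])
      have "norm (bpow (FR F T ((1-t)*l + t*m)) n u) \<le> gam * norm (a *\<^sub>R bpow (FR F T l) n u + b *\<^sub>R bpow (FR F T m) n u)"
        using x y by (rule gam(2))
      also have "norm (a *\<^sub>R bpow (FR F T l) n u + b *\<^sub>R bpow (FR F T m) n u) \<le> a * norm (bpow (FR F T l) n u) + b * norm (bpow (FR F T m) n u)"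
        using a0 by (metis (no_types, opaque_lifting) norm_triangle_ineq norm_scaleR abs_of_nonneg)
      also have "\<dots> \<le> a * (C1 * \<eta>1 ^ n * norm u) + b * (C2 * \<eta>2 ^ n * norm u)"
        using a0 C1 C2 by (intro add_mono mult_left_mono order_trans[OF norm_blinfun] mult_right_mono) auto
      finally have main: "norm (bpow (FR F T ((1-t)*l + t*m)) n u) \<le> gam * (a * (C1 * \<eta>1 ^ n * norm u) + b * (C2 * \<eta>2 ^ n * norm u))"
        using gam(1) by simp
      have ha: "a * \<eta>1 ^ n = (1-t) * \<theta> ^ n"
      proof -
        have "\<eta>1 ^ n = exp (real n * L1)" using e1 by (simp add: L1_def exp_of_nat_mult)
        then have "exp (t * s) * \<eta>1 ^ n = exp (t * s + real n * L1)" by (simp add: exp_add)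
        also have "t * s + real n * L1 = real n * ((1-t) * L1 + t * L2)" by (simp add: s_def algebra_simps)
        also have "exp \<dots> = \<theta> ^ n" by (simp add: \<theta>_def exp_of_nat_mult)
        finally show ?thesis by (simp add: a_def)
      qed
      have hb: "b * \<eta>2 ^ n = t * \<theta> ^ n"
      proof -
        have "\<eta>2 ^ n = exp (real n * L2)" using e2 by (simp add: L2_def exp_of_nat_mult)
        then have "exp (-(1-t) * s) * \<eta>2 ^ n = exp (-(1-t) * s + real n * L2)" by (simp add: exp_add)
        also have "-(1-t) * s + real n * L2 = real n * ((1-t) * L1 + t * L2)" by (simp add: s_def algebra_simps)
        also have "exp \<dots> = \<theta> ^ n" by (simp add: \<theta>_def exp_of_nat_mult)
        finally show ?thesis by (simp add: b_def)
      qed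
      have "a * (C1 * \<eta>1 ^ n * norm u) + b * (C2 * \<eta>2 ^ n * norm u) = C1 * norm u * (a * \<eta>1 ^ n) + C2 * norm u * (b * \<eta>2 ^ n)"
        by (simp only: mult_ac)
      also have "\<dots> = C1 * norm u * ((1-t) * \<theta> ^ n) + C2 * norm u * (t * \<theta> ^ n)" unfolding ha hb ..
      also have "\<dots> = ((1-t) * C1 + t * C2) * norm u * \<theta> ^ n" by (simp add: algebra_simps)
      also have "\<dots> \<le> (C1 + C2) * norm u * \<theta> ^ n"
        using t C10 C20 th0 by (intro mult_right_mono add_mono) (auto simp: mult_left_le_one_le)
      finally have "gam * (a * (C1 * \<eta>1 ^ n * norm u) + b * (C2 * \<eta>2 ^ n * norm u)) \<le> gam * ((C1 + C2) * norm u * \<theta> ^ n)"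
        using gam(1) by (intro mult_left_mono) auto
      with main show ?thesis by (simp add: algebra_simps)
    qed
    then show "\<exists>C. \<forall>n. norm (bpow (FR F T ((1-t)*l + t*m)) n u) \<le> C * \<theta> ^ n" by blast
  qed
  also have "\<theta> \<le> (1-t) * exp L1 + t * exp L2"
    unfolding \<theta>_def using convex_onD[OF exp_convex, of t L1 L2] t by simp
  also have "\<dots> = (1-t) * gr (FR F T l) + t * gr (FR F T m) + e"
    using e1 e2 by (simp add: L1_def L2_def \<eta>1_def \<eta>2_def algebra_simps)
  finally show "gr (FR F T ((1-t)*l + t*m)) \<le> (1-t) * gr (FR F T l) + t * gr (FR F T m) + e" .
qed

end

theorem corollary2p8:
  fixes K :: "'a::banach set" and A T F :: "'a \<Rightarrow>\<^sub>L 'a"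
  assumes cone: "is_cone K" and gen: "generating_cone K" and nor: "normal_cone K"
    and A_pos: "blinfun_apply A ` K \<subseteq> K"
    and split: "A = T + F"
    and T_pos: "blinfun_apply T ` K \<subseteq> K"
    and F_pos: "blinfun_apply F ` K \<subseteq> K"
    and rT: "spec_rad T < 1"
  shows "(\<forall>l1 l2. spec_rad T < l1 \<and> l1 \<le> l2 \<longrightarrow>
              spec_rad (FR F T l2) \<le> spec_rad (FR F T l1))
    \<and> convex_on {spec_rad T<..} (\<lambda>l. spec_rad (FR F T l))
    \<and> ((\<forall>l>spec_rad T. spec_rad (FR F T l) < 1) \<noteq>
       (\<exists>l1 l2. spec_rad T < l1 \<and> l1 < l2 \<and>
              spec_rad (FR F T l1) \<ge> 1 \<and> spec_rad (FR F T l2) < 1))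
    \<and> ((\<forall>l>spec_rad T. spec_rad (FR F T l) < 1) \<longrightarrow> spec_rad A = spec_rad T)
    \<and> ((\<exists>l1 l2. spec_rad T < l1 \<and> l1 < l2 \<and>
              spec_rad (FR F T l1) \<ge> 1 \<and> spec_rad (FR F T l2) < 1) \<longrightarrow>
        spec_rad A > spec_rad T \<and> spec_rad (FR F T (spec_rad A)) = 1)"
proof -
  interpret ocone K using cone gen nor by unfold_locales
  have T: "pos T" using T_pos by (auto simp: pos_def)
  have F: "pos F" using F_pos by (auto simp: pos_def)
  have A: "pos A" using A_pos by (auto simp: pos_def)
  have sT: "spec_rad T = gr T" by (rule spec_rad_eq[OF T])
  have sA: "spec_rad A = gr A" by (rule spec_rad_eq[OF A])
  have sF: "spec_rad (FR F T l) = gr (FR F T l)" if "gr T < l" for l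
    by (rule spec_rad_eq[OF FR_pos[OF T F that]])
  have keyA: "gr (FR F T l) < 1 \<longleftrightarrow> gr A < l" if "gr T < l" for l
    using key[OF T F that] split by simp
  have aT: "gr T \<le> gr A"
    by (rule gr_mono[OF T]) (use F split in simp)
  define \<phi> where "\<phi> l = spec_rad (FR F T l)" for l
  have phi: "\<phi> l = gr (FR F T l)" if "gr T < l" for l using sF[OF that] by (simp add: \<phi>_def)
  have mono: "\<forall>l1 l2. spec_rad T < l1 \<and> l1 \<le> l2 \<longrightarrow> spec_rad (FR F T l2) \<le> spec_rad (FR F T l1)"
  proof (intro allI impI)
    fix l1 l2 assume h: "spec_rad T < l1 \<and> l1 \<le> l2"
    then have l1: "gr T < l1" and l2: "gr T < l2" using sT by auto
    show "spec_rad (FR F T l2) \<le> spec_rad (FR F T l1)"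
      using FR_mono[OF T F l1] h sF[OF l1] sF[OF l2] by simp
  qed
  have conv: "convex_on {spec_rad T<..} (\<lambda>l. spec_rad (FR F T l))"
  proof (rule convex_onI)
    fix t x y :: real
    assume t: "0 < t" "t < 1" and x: "x \<in> {spec_rad T<..}" and y: "y \<in> {spec_rad T<..}"
    then have x': "gr T < x" and y': "gr T < y" using sT by auto
    have "spec_rad (FR F T ((1 - t) *\<^sub>R x + t *\<^sub>R y)) = gr (FR F T ((1-t)*x + t*y))"
      using sF[OF nu_gt[OF x' y' t]] by simp
    also have "\<dots> \<le> (1-t) * gr (FR F T x) + t * gr (FR F T y)" by (rule conv_pt[OF T F x' y' t])
    finally show "spec_rad (FR F T ((1 - t) *\<^sub>R x + t *\<^sub>R y)) \<le> (1 - t) * spec_rad (FR F T x) + t * spec_rad (FR F T y)"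
      using sF[OF x'] sF[OF y'] by simp
  qed auto
  define P1 where "P1 = (\<forall>l>spec_rad T. spec_rad (FR F T l) < 1)"
  define P2 where "P2 = (\<exists>l1 l2. spec_rad T < l1 \<and> l1 < l2 \<and> spec_rad (FR F T l1) \<ge> 1 \<and> spec_rad (FR F T l2) < 1)"
  have P1iff: "P1 \<longleftrightarrow> gr A \<le> gr T"
  proof
    assume p: P1
    show "gr A \<le> gr T"
    proof (rule ccontr)
      assume "\<not> gr A \<le> gr T"
      then have g: "gr T < gr A" by simp
      then have "spec_rad (FR F T (gr A)) < 1" using p sT unfolding P1_def by auto
      then show False using keyA[OF g] sF[OF g] by simp
    qed
  next
    assume a: "gr A \<le> gr T"
    show P1 unfolding P1_def
    proof (intro allI impI)
      fix l assume "spec_rad T < l"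
      then have l: "gr T < l" using sT by simp
      then show "spec_rad (FR F T l) < 1" using keyA[OF l] sF[OF l] a by simp
    qed
  qed
  have P2iff: "P2 \<longleftrightarrow> gr T < gr A"
  proof
    assume P2
    then obtain l1 l2 where h: "spec_rad T < l1" "l1 < l2" "spec_rad (FR F T l1) \<ge> 1"
      unfolding P2_def by blast
    then have l1: "gr T < l1" using sT by simp
    then have "\<not> gr A < l1" using keyA[OF l1] sF[OF l1] h by simp
    then show "gr T < gr A" using l1 by simp
  next
    assume g: "gr T < gr A"
    have g2: "gr T < gr A + 1" using g by simp
    have "spec_rad (FR F T (gr A)) \<ge> 1" using keyA[OF g] sF[OF g] by simp
    moreover have "spec_rad (FR F T (gr A + 1)) < 1" using keyA[OF g2] sF[OF g2] by simp
    ultimately show P2 unfolding P2_def using g sT by (intro exI[of _ "gr A"] exI[of _ "gr A + 1"]) auto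
  qed
  have c1: "P1 \<noteq> P2" using P1iff P2iff by auto
  have c2: "P1 \<longrightarrow> spec_rad A = spec_rad T" using P1iff aT sA sT by auto
  have c3: "P2 \<longrightarrow> spec_rad A > spec_rad T \<and> spec_rad (FR F T (spec_rad A)) = 1"
  proof
    assume P2
    then have g: "gr T < gr A" using P2iff by simp
    have ge: "\<phi> (gr A) \<ge> 1" using keyA[OF g] phi[OF g] by simp
    have cont: "continuous_on {spec_rad T<..} \<phi>"
      unfolding \<phi>_def by (rule convex_on_continuous[OF _ conv]) auto
    have le: "\<phi> (gr A) \<le> 1"
    proof (rule ccontr)
      assume "\<not> \<phi> (gr A) \<le> 1"
      then have e: "\<phi> (gr A) - 1 > 0" by simp
      have inS: "gr A \<in> {spec_rad T<..}" using g sT by simp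
      obtain d where d: "d > 0" "\<And>x'. x' \<in> {spec_rad T<..} \<Longrightarrow> dist x' (gr A) < d \<Longrightarrow> dist (\<phi> x') (\<phi> (gr A)) < \<phi> (gr A) - 1"
        using cont inS e unfolding continuous_on_iff by metis
      define l where "l = gr A + d/2"
      have l: "gr T < l" "gr A < l" using g d by (auto simp: l_def)
      have "dist (\<phi> l) (\<phi> (gr A)) < \<phi> (gr A) - 1" using d l sT by (intro d(2)) (auto simp: l_def dist_real_def)
      moreover have "\<phi> l < 1" using keyA[OF l(1)] phi[OF l(1)] l(2) by simp
      ultimately show False by (simp add: dist_real_def)
    qed
    show "spec_rad A > spec_rad T \<and> spec_rad (FR F T (spec_rad A)) = 1"
      using g ge le sA sT by (simp add: \<phi>_def)
  qed
  show ?thesis using mono conv c1 c2 c3 unfolding P1_def P2_def by blast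
qed

end
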